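(* Let $T_n$ denote the Chebyshev polynomial of degree $n$. For any $0\le\delta<1$ and any sequence $\boldsymbol\lambda=(\lambda_1,\dots,\lambda_d)$ of reals with $-1\le\lambda_i\le1+\delta$, we have $$\gamma_2(\mathcal D_{T_n,\boldsymbol\lambda})\le(2n^2-1)\,T_n(1+\delta)\qquad\text{for all }n\ge1.$$
   Context: The Chebyshev polynomial $T_n$ is defined by $T_n(\cos\theta)=\cos(n\theta)$. For a continuously differentiable $f$ and a sequence $\boldsymbol\lambda=(\lambda_1,\dots,\lambda_d)$, $\mathcal D_{f,\boldsymbol\lambda}$ is the $d\times d$ matrix with entries $(\mathcal D_{f,\boldsymbol\lambda})_{ij}=\frac{f(\lambda_i)-f(\lambda_j)}{\lambda_i-\lambda_j}$ if $\lambda_i\ne\lambda_j$ and $f'(\lambda_i)$ if $\lambda_i=\lambda_j$. For a $d\times d$ matrix $\mathbf M$, $\gamma_2(\mathbf M)=\inf\max\big(\{\|v_i\|^2:1\le i\le d\}\cup\{\|w_j\|^2:1\le j\le d\}\big)$, the infimum over all families of vectors $v_i,w_j$ (in any Hilbert space) with $\mathbf M_{ij}=\langle v_i|w_j\rangle$ for all $i,j$. *)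

theory Defs
  imports "HOL-Analysis.Analysis"
begin

fun cheb :: "nat \<Rightarrow> real \<Rightarrow> real" where
  "cheb 0 x = 1"
| "cheb (Suc 0) x = x"
| "cheb (Suc (Suc n)) x = 2 * x * cheb (Suc n) x - cheb n x"

definition divdiff_matrix :: "(real \<Rightarrow> real) \<Rightarrow> (nat \<Rightarrow> real) \<Rightarrow> nat \<Rightarrow> nat \<Rightarrow> real" where
  "divdiff_matrix f lam i j =
     (if lam i \<noteq> lam j then (f (lam i) - f (lam j)) / (lam i - lam j) else deriv f (lam i))"

text \<open>Vectors live in R^k (k arbitrary),
  represented as functions on {0..<k}; the inner product is the standard one.
  (Any factorization through a Hilbert space reduces to a finite-dimensional
  real one.) The 0 inserted into the Max set is harmless since squared norms are
  nonnegative, and makes the definition total for d = 0.\<close>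
definition gamma2 :: "nat \<Rightarrow> (nat \<Rightarrow> nat \<Rightarrow> real) \<Rightarrow> real" where
  "gamma2 d M = Inf {c. \<exists>(k::nat) (v::nat \<Rightarrow> nat \<Rightarrow> real) (w::nat \<Rightarrow> nat \<Rightarrow> real).
       (\<forall>i<d. \<forall>j<d. M i j = (\<Sum>l<k. v i l * w j l)) \<and>
       c = Max (insert 0 ((\<lambda>i. \<Sum>l<k. (v i l)^2) ` {..<d} \<union> (\<lambda>j. \<Sum>l<k. (w j l)^2) ` {..<d}))}"

end

theory Submission
  imports Defs
begin


fun cheb2 :: "nat \<Rightarrow> real \<Rightarrow> real" where
  "cheb2 0 x = 1"
| "cheb2 (Suc 0) x = 2 * x"
| "cheb2 (Suc (Suc n)) x = 2 * x * cheb2 (Suc n) x - cheb2 n x"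

lemma cheb2_step: "cheb2 (Suc k) y = y * cheb2 k y + cheb (Suc k) y"
proof (induction k rule: nat_less_induct)
  case (1 k)
  show ?case
  proof (cases k)
    case 0 then show ?thesis by simp
  next
    case (Suc m)
    show ?thesis
    proof (cases m)
      case 0 then show ?thesis using Suc by (simp add: algebra_simps)
    next
      case (Suc p)
      have "cheb2 (Suc m) y = y * cheb2 m y + cheb (Suc m) y" using 1 \<open>k = Suc m\<close> by auto
      moreover have "cheb2 (Suc p) y = y * cheb2 p y + cheb (Suc p) y" using 1 \<open>k = Suc m\<close> Suc by auto
      ultimately have h1: "cheb2 (Suc (Suc p)) y = y * cheb2 (Suc p) y + cheb (Suc (Suc p)) y"
        and h2: "cheb2 (Suc p) y = y * cheb2 p y + cheb (Suc p) y" using Suc by auto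
      have "cheb2 (Suc (Suc (Suc p))) y = 2 * y * cheb2 (Suc (Suc p)) y - cheb2 (Suc p) y" by simp
      also have "\<dots> = 2 * y * (y * cheb2 (Suc p) y + cheb (Suc (Suc p)) y) - (y * cheb2 p y + cheb (Suc p) y)"
        using h1 h2 by simp
      also have "\<dots> = y * (2 * y * cheb2 (Suc p) y - cheb2 p y) + (2 * y * cheb (Suc (Suc p)) y - cheb (Suc p) y)"
        by (simp add: algebra_simps)
      also have "\<dots> = y * cheb2 (Suc (Suc p)) y + cheb (Suc (Suc (Suc p))) y" by simp
      finally show ?thesis using \<open>k = Suc m\<close> Suc by simp
    qed
  qed
qed

lemma cheb2_sum: "cheb2 k y = (\<Sum>i\<le>k. y ^ (k - i) * cheb i y)"
proof (induction k)
  case 0 then show ?case by simp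
next
  case (Suc k)
  have "(\<Sum>i\<le>Suc k. y ^ (Suc k - i) * cheb i y) = (\<Sum>i\<le>k. y ^ (Suc k - i) * cheb i y) + cheb (Suc k) y"
    by simp
  also have "(\<Sum>i\<le>k. y ^ (Suc k - i) * cheb i y) = y * (\<Sum>i\<le>k. y ^ (k - i) * cheb i y)"
    by (simp add: sum_distrib_left Suc_diff_le mult.assoc)
  finally show ?case using Suc by (simp add: cheb2_step)
qed

definition ee :: "nat \<Rightarrow> real" where "ee j = (if j = 0 then 1 else 2)"

definition PP :: "nat \<Rightarrow> real \<Rightarrow> real \<Rightarrow> real" where
  "PP n x y = (\<Sum>j<n. ee j * cheb j x * cheb2 (n - 1 - j) y)"

lemma PP_rec: "PP (Suc (Suc n)) x y = 2 * y * PP (Suc n) x y - PP n x y + 2 * cheb (Suc n) x"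
proof -
  have A: "PP (Suc (Suc n)) x y = (\<Sum>j<n. ee j * cheb j x * cheb2 (Suc n - j) y)
     + ee n * cheb n x * (2 * y) + 2 * cheb (Suc n) x"
    by (simp add: PP_def ee_def Suc_diff_le)
  have B: "PP (Suc n) x y = (\<Sum>j<n. ee j * cheb j x * cheb2 (n - j) y) + ee n * cheb n x"
    by (simp add: PP_def)
  have C: "(\<Sum>j<n. ee j * cheb j x * cheb2 (Suc n - j) y)
     = 2 * y * (\<Sum>j<n. ee j * cheb j x * cheb2 (n - j) y) - PP n x y"
  proof -
    have "\<And>j. j < n \<Longrightarrow> cheb2 (Suc n - j) y = 2 * y * cheb2 (n - j) y - cheb2 (n - 1 - j) y"
    proof -
      fix j assume "j < n"
      then have "Suc n - j = Suc (Suc (n - 1 - j))" "n - j = Suc (n - 1 - j)" by auto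
      then show "cheb2 (Suc n - j) y = 2 * y * cheb2 (n - j) y - cheb2 (n - 1 - j) y" by simp
    qed
    note R = this
    have "(\<Sum>j<n. ee j * cheb j x * cheb2 (Suc n - j) y)
      = (\<Sum>j<n. 2 * y * (ee j * cheb j x * cheb2 (n - j) y) - ee j * cheb j x * cheb2 (n - 1 - j) y)"
      by (intro sum.cong refl) (simp add: R algebra_simps)
    also have "\<dots> = 2 * y * (\<Sum>j<n. ee j * cheb j x * cheb2 (n - j) y) - PP n x y"
      by (simp add: sum_subtractf sum_distrib_left PP_def)
    finally show ?thesis .
  qed
  show ?thesis using A B C by (simp add: algebra_simps)
qed

lemma PP_ident: "cheb n x - cheb n y = (x - y) * PP n x y"
proof (induction n x rule: cheb.induct)
  case (1 x) then show ?case by (simp add: PP_def)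
next
  case (2 x) then show ?case by (simp add: PP_def ee_def)
next
  case (3 n x)
  have "cheb (Suc (Suc n)) x - cheb (Suc (Suc n)) y
     = 2 * y * (cheb (Suc n) x - cheb (Suc n) y) + 2 * (x - y) * cheb (Suc n) x - (cheb n x - cheb n y)"
    by (simp add: algebra_simps)
  also have "\<dots> = 2 * y * ((x - y) * PP (Suc n) x y) + 2 * (x - y) * cheb (Suc n) x - ((x - y) * PP n x y)"
    using 3 by simp
  also have "\<dots> = (x - y) * PP (Suc (Suc n)) x y" by (simp add: PP_rec algebra_simps)
  finally show ?case .
qed

lemma cheb_cont: "isCont (cheb n) x"
  by (induction n x rule: cheb.induct) (auto intro!: continuous_intros)

lemma PP_cont: "isCont (\<lambda>z. PP n z y) x"
  unfolding PP_def by (auto intro!: continuous_intros cheb_cont)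

lemma cheb_deriv: "deriv (cheb n) x = PP n x x"
proof -
  have "DERIV (cheb n) x :> PP n x x"
    unfolding CARAT_DERIV
    by (rule exI[of _ "\<lambda>z. PP n z x"]) (auto simp: PP_cont PP_ident[where n=n and y=x] mult.commute)
  then show ?thesis by (rule DERIV_imp_deriv)
qed

lemma divdiff_PP: "divdiff_matrix (cheb n) lam i j = PP n (lam i) (lam j)"
  unfolding divdiff_matrix_def using PP_ident[of n "lam i" "lam j"]
  by (auto simp: cheb_deriv field_simps)


lemma cheb_cosh: "cheb k (cosh t) = cosh (real k * t) \<and> cheb (Suc k) (cosh t) = cosh (real (Suc k) * t)"
proof (induction k)
  case 0 then show ?case by simp
next
  case (Suc k)
  have "cosh (real (Suc (Suc k)) * t) = 2 * cosh t * cosh (real (Suc k) * t) - cosh (real k * t)"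
  proof -
    have "cosh (real (Suc (Suc k)) * t) = cosh (real (Suc k) * t + t)" by (simp add: algebra_simps)
    moreover have "cosh (real k * t) = cosh (real (Suc k) * t - t)" by (simp add: algebra_simps)
    moreover have "\<And>a. cosh (a + t) = 2 * cosh t * cosh a - cosh (a - t)"
      by (simp add: cosh_add cosh_diff algebra_simps)
    ultimately show ?thesis by metis
  qed
  then show ?case using Suc by simp
qed

lemma cheb_cos: "cheb k (cos t) = cos (real k * t) \<and> cheb (Suc k) (cos t) = cos (real (Suc k) * t)"
proof (induction k)
  case 0 then show ?case by simp
next
  case (Suc k)
  have "cos (real (Suc (Suc k)) * t) = 2 * cos t * cos (real (Suc k) * t) - cos (real k * t)"
  proof -
    have "cos (real (Suc (Suc k)) * t) = cos (real (Suc k) * t + t)" by (simp add: algebra_simps)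
    moreover have "cos (real k * t) = cos (real (Suc k) * t - t)" by (simp add: algebra_simps)
    moreover have "\<And>a. cos (a + t) = 2 * cos t * cos a - cos (a - t)"
      by (simp add: cos_add cos_diff algebra_simps)
    ultimately show ?thesis by metis
  qed
  then show ?case using Suc by simp
qed

lemma cheb_X: "X \<ge> 1 \<Longrightarrow> cheb k X = cosh (real k * arcosh X)"
  using cheb_cosh[of k "arcosh X"] by simp

lemma cheb_ge1: "X \<ge> 1 \<Longrightarrow> cheb k X \<ge> 1"
  by (simp add: cheb_X cosh_real_ge_1)

lemma cheb_abs_le:
  assumes "X \<ge> 1" "-1 \<le> y" "y \<le> X"
  shows "\<bar>cheb k y\<bar> \<le> cheb k X"
proof (cases "y \<le> 1")
  case True
  then have "cheb k y = cos (real k * arccos y)" using cheb_cos[of k "arccos y"] assms by simp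
  then have "\<bar>cheb k y\<bar> \<le> 1" by simp
  then show ?thesis using cheb_ge1[OF assms(1), of k] by linarith
next
  case False
  then have y1: "y \<ge> 1" by simp
  have "arcosh y \<le> arcosh X" using arcosh_less_iff_real[of X y] y1 assms by linarith
  then have "real k * arcosh y \<le> real k * arcosh X" by (simp add: mult_left_mono)
  then have "cosh (real k * arcosh y) \<le> cosh (real k * arcosh X)"
    using y1 assms by (subst cosh_real_nonneg_le_iff) auto
  then show ?thesis using cheb_X[OF y1] cheb_X[OF assms(1)] by (simp add: cosh_real_ge_1)
qed

lemma cheb_mult_le: "X \<ge> 1 \<Longrightarrow> cheb a X * cheb b X \<le> cheb (a + b) X"
proof -
  assume X: "X \<ge> 1"
  define t where "t = arcosh X"
  have t: "t \<ge> 0" using X by (simp add: t_def)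
  have "cheb (a + b) X = cosh (real a * t + real b * t)" using cheb_X[OF X] by (simp add: t_def algebra_simps)
  also have "\<dots> = cosh (real a * t) * cosh (real b * t) + sinh (real a * t) * sinh (real b * t)"
    by (simp add: cosh_add)
  also have "\<dots> \<ge> cosh (real a * t) * cosh (real b * t)" using t by simp
  finally show ?thesis using cheb_X[OF X] by (simp add: t_def)
qed

lemma cheb_mono: "X \<ge> 1 \<Longrightarrow> a \<le> b \<Longrightarrow> cheb a X \<le> cheb b X"
  using cheb_mult_le[of X a "b - a"] cheb_ge1[of X a] cheb_ge1[of X "b - a"]
  by (simp add: mult_le_cancel_left1) (smt (verit) mult_le_cancel_left1)

lemma pow_cheb_le: "X \<ge> 1 \<Longrightarrow> X ^ m * cheb i X \<le> cheb (i + m) X"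
proof (induction m)
  case 0 then show ?case by simp
next
  case (Suc m)
  have "X ^ Suc m * cheb i X = X * (X ^ m * cheb i X)" by simp
  also have "\<dots> \<le> X * cheb (i + m) X" using Suc by (simp add: mult_left_mono)
  also have "\<dots> = cheb 1 X * cheb (i + m) X" by simp
  also have "\<dots> \<le> cheb (1 + (i + m)) X" by (rule cheb_mult_le[OF Suc.prems])
  finally show ?case by simp
qed

lemma cheb2_le: "X \<ge> 1 \<Longrightarrow> cheb2 k X \<le> real (k + 1) * cheb k X"
proof -
  assume X: "X \<ge> 1"
  have "cheb2 k X = (\<Sum>i\<le>k. X ^ (k - i) * cheb i X)" by (rule cheb2_sum)
  also have "\<dots> \<le> (\<Sum>i\<le>k. cheb k X)"
    using pow_cheb_le[OF X] by (intro sum_mono) (metis atMost_iff le_add_diff_inverse)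
  finally show ?thesis by simp
qed

lemma cheb2_ge1: "X \<ge> 1 \<Longrightarrow> cheb2 k X \<ge> 1"
proof -
  assume X: "X \<ge> 1"
  have nn: "\<forall>i\<in>{..k}. 0 \<le> X ^ (k - i) * cheb i X" using X cheb_ge1[OF X] 
    by (smt (verit) mult_nonneg_nonneg zero_le_power)
  have "X ^ (k - k) * cheb k X \<le> (\<Sum>i\<le>k. X ^ (k - i) * cheb i X)"
    by (rule member_le_sum[of k "{..k}" "\<lambda>i. X ^ (k - i) * cheb i X"]) (use nn in auto)
  then show ?thesis using cheb_ge1[OF X, of k] cheb2_sum[of k X] by simp
qed

lemma cheb2_abs_le:
  assumes "X \<ge> 1" "-1 \<le> y" "y \<le> X"
  shows "\<bar>cheb2 k y\<bar> \<le> cheb2 k X"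
proof -
  have "\<bar>cheb2 k y\<bar> \<le> (\<Sum>i\<le>k. \<bar>y ^ (k - i) * cheb i y\<bar>)"
    unfolding cheb2_sum by (rule sum_abs)
  also have "\<dots> \<le> (\<Sum>i\<le>k. X ^ (k - i) * cheb i X)"
  proof (intro sum_mono)
    fix i
    have "\<bar>y\<bar> \<le> X" using assms by linarith
    then have "\<bar>y\<bar> ^ (k - i) \<le> X ^ (k - i)" by (simp add: power_mono)
    have "\<bar>y ^ (k - i) * cheb i y\<bar> = \<bar>y\<bar> ^ (k - i) * \<bar>cheb i y\<bar>" by (simp add: abs_mult power_abs)
    also have "\<dots> \<le> X ^ (k - i) * cheb i X"
      by (rule mult_mono) (use \<open>\<bar>y\<bar> ^ (k - i) \<le> X ^ (k - i)\<close> cheb_abs_le[OF assms, of i] assms in auto)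
    finally show "\<bar>y ^ (k - i) * cheb i y\<bar> \<le> X ^ (k - i) * cheb i X" .
  qed
  finally show ?thesis by (simp add: cheb2_sum)
qed

lemma ee_sum: "(\<Sum>l<n. ee l * real (n - l)) = real n ^ 2"
proof (induction n)
  case 0 then show ?case by simp
next
  case (Suc n)
  have s: "(\<Sum>l<n. ee l) = (if n = 0 then 0 else 2 * real n - 1)"
    by (induction n) (auto simp: ee_def)
  have "(\<Sum>l<Suc n. ee l * real (Suc n - l)) = (\<Sum>l<n. ee l * real (Suc n - l)) + ee n"
    by simp
  also have "(\<Sum>l<n. ee l * real (Suc n - l)) = (\<Sum>l<n. ee l * real (n - l) + ee l)"
    by (intro sum.cong refl) (auto simp: Suc_diff_le algebra_simps)
  also have "\<dots> = real n ^ 2 + (\<Sum>l<n. ee l)" by (simp only: sum.distrib Suc.IH)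
  finally show ?case using s by (simp add: ee_def power2_eq_square algebra_simps)
qed

lemma PP_bound: "X \<ge> 1 \<Longrightarrow> PP n X X \<le> real n ^ 2 * cheb n X"
proof -
  assume X: "X \<ge> 1"
  have "PP n X X \<le> (\<Sum>l<n. ee l * real (n - l) * cheb n X)"
    unfolding PP_def
  proof (intro sum_mono)
    fix l assume "l \<in> {..<n}"
    then have l: "l < n" by simp
    have e: "ee l \<ge> 0" by (simp add: ee_def)
    have "cheb l X * cheb2 (n - 1 - l) X \<le> cheb l X * (real (n - 1 - l + 1) * cheb (n - 1 - l) X)"
      using cheb2_le[OF X] cheb_ge1[OF X, of l] by (simp add: mult_left_mono)
    also have "\<dots> = real (n - l) * (cheb l X * cheb (n - 1 - l) X)" using l
      by (simp add: Suc_diff_Suc algebra_simps)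
    also have "\<dots> \<le> real (n - l) * cheb (l + (n - 1 - l)) X"
      by (intro mult_left_mono cheb_mult_le X) simp
    also have "\<dots> \<le> real (n - l) * cheb n X"
      using l by (intro mult_left_mono cheb_mono X) auto
    finally show "ee l * cheb l X * cheb2 (n - 1 - l) X \<le> ee l * real (n - l) * cheb n X"
      using e by (simp add: mult.assoc mult_left_mono)
  qed
  also have "\<dots> = real n ^ 2 * cheb n X" by (simp only: sum_distrib_right[symmetric] ee_sum)
  finally show ?thesis .
qed


theorem lemma6:
  fixes \<delta> :: real and d n :: nat and lam :: "nat \<Rightarrow> real"
  assumes "0 \<le> \<delta>" and "\<delta> < 1"
    and "\<forall>i<d. -1 \<le> lam i \<and> lam i \<le> 1 + \<delta>"
    and "n \<ge> 1"
  shows "gamma2 d (divdiff_matrix (cheb n) lam) \<le> (2 * real n ^ 2 - 1) * cheb n (1 + \<delta>)"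
proof -
  define X where "X = 1 + \<delta>"
  have X: "X \<ge> 1" using assms by (simp add: X_def)
  have lamb: "\<And>i. i < d \<Longrightarrow> -1 \<le> lam i \<and> lam i \<le> X" using assms(3) by (simp add: X_def)
  define T where "T l = cheb l X" for l
  define U where "U l = cheb2 (n - 1 - l) X" for l
  have Tp: "T l > 0" for l using cheb_ge1[OF X] by (simp add: T_def) (smt (verit) cheb_ge1 X)
  have Up: "U l > 0" for l using cheb2_ge1[OF X] by (simp add: U_def) (smt (verit) cheb2_ge1 X)
  have ep: "ee l > 0" for l by (simp add: ee_def)
  define v where "v i l = sqrt (ee l * U l / T l) * cheb l (lam i)" for i l
  define w where "w j l = sqrt (ee l * T l / U l) * cheb2 (n - 1 - l) (lam j)" for j l
  define B where "B = real n ^ 2 * cheb n X"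
  have fact: "divdiff_matrix (cheb n) lam i j = (\<Sum>l<n. v i l * w j l)" for i j
  proof -
    have "sqrt (ee l * U l / T l) * sqrt (ee l * T l / U l) = ee l" for l
    proof -
      have "sqrt (ee l * U l / T l) * sqrt (ee l * T l / U l) = sqrt ((ee l * U l / T l) * (ee l * T l / U l))"
        by (rule real_sqrt_mult[symmetric])
      also have "(ee l * U l / T l) * (ee l * T l / U l) = (ee l)^2"
        using Tp[of l] Up[of l] by (simp add: field_simps power2_eq_square)
      finally have "sqrt (ee l * U l / T l) * sqrt (ee l * T l / U l) = sqrt ((ee l)^2)" .
      then show ?thesis using ep[of l] by (metis real_sqrt_abs abs_of_pos)
    qed
    then have "v i l * w j l = ee l * cheb l (lam i) * cheb2 (n - 1 - l) (lam j)" for l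
      unfolding v_def w_def by (metis (no_types, lifting) mult.assoc mult.left_commute)
    then show ?thesis by (simp add: divdiff_PP PP_def)
  qed
  have nv: "(\<Sum>l<n. (v i l)^2) \<le> B" if "i < d" for i
  proof -
    have "(\<Sum>l<n. (v i l)^2) \<le> (\<Sum>l<n. ee l * T l * U l)"
    proof (intro sum_mono)
      fix l
      have "(cheb l (lam i))^2 \<le> (T l)^2"
        using cheb_abs_le[OF X, of "lam i" l] lamb[OF that] unfolding T_def
        by (metis abs_ge_zero power2_abs power_mono)
      then have "(ee l * U l / T l) * (cheb l (lam i))^2 \<le> (ee l * U l / T l) * (T l)^2"
        using ep[of l] Up[of l] Tp[of l] by (intro mult_left_mono) auto
      also have "\<dots> = ee l * T l * U l" using Tp[of l] by (simp add: field_simps power2_eq_square)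
      finally show "(v i l)^2 \<le> ee l * T l * U l"
        unfolding v_def using ep[of l] Up[of l] Tp[of l] by (simp add: power_mult_distrib)
    qed
    also have "\<dots> = PP n X X" by (simp add: PP_def T_def U_def)
    also have "\<dots> \<le> B" unfolding B_def by (rule PP_bound[OF X])
    finally show ?thesis .
  qed
  have nw: "(\<Sum>l<n. (w j l)^2) \<le> B" if "j < d" for j
  proof -
    have "(\<Sum>l<n. (w j l)^2) \<le> (\<Sum>l<n. ee l * T l * U l)"
    proof (intro sum_mono)
      fix l
      have "(cheb2 (n - 1 - l) (lam j))^2 \<le> (U l)^2"
        using cheb2_abs_le[OF X, of "lam j" "n - 1 - l"] lamb[OF that] unfolding U_def
        by (metis abs_ge_zero power2_abs power_mono)
      then have "(ee l * T l / U l) * (cheb2 (n - 1 - l) (lam j))^2 \<le> (ee l * T l / U l) * (U l)^2"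
        using ep[of l] Up[of l] Tp[of l] by (intro mult_left_mono) auto
      also have "\<dots> = ee l * T l * U l" using Up[of l] by (simp add: field_simps power2_eq_square)
      finally show "(w j l)^2 \<le> ee l * T l * U l"
        unfolding w_def using ep[of l] Up[of l] Tp[of l] by (simp add: power_mult_distrib)
    qed
    also have "\<dots> = PP n X X" by (simp add: PP_def T_def U_def)
    also have "\<dots> \<le> B" unfolding B_def by (rule PP_bound[OF X])
    finally show ?thesis .
  qed
  have B0: "B \<ge> 0" unfolding B_def using cheb_ge1[OF X, of n] by simp
  define S where "S = {c. \<exists>(k::nat) (v::nat \<Rightarrow> nat \<Rightarrow> real) (w::nat \<Rightarrow> nat \<Rightarrow> real).
       (\<forall>i<d. \<forall>j<d. divdiff_matrix (cheb n) lam i j = (\<Sum>l<k. v i l * w j l)) \<and>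
       c = Max (insert 0 ((\<lambda>i. \<Sum>l<k. (v i l)^2) ` {..<d} \<union> (\<lambda>j. \<Sum>l<k. (w j l)^2) ` {..<d}))}"
  define c0 where "c0 = Max (insert 0 ((\<lambda>i. \<Sum>l<n. (v i l)^2) ` {..<d} \<union> (\<lambda>j. \<Sum>l<n. (w j l)^2) ` {..<d}))"
  have c0S: "c0 \<in> S" unfolding S_def c0_def using fact by blast
  have c0B: "c0 \<le> B" unfolding c0_def using nv nw B0 by (subst Max_le_iff) auto
  have bdd: "bdd_below S"
  proof (rule bdd_belowI[of _ 0])
    fix c assume "c \<in> S"
    then show "0 \<le> c" unfolding S_def by (auto intro: Max_ge)
  qed
  have "gamma2 d (divdiff_matrix (cheb n) lam) = Inf S" by (simp add: gamma2_def S_def)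
  also have "\<dots> \<le> c0" by (rule cInf_lower[OF c0S bdd])
  also have "\<dots> \<le> B" by (rule c0B)
  also have "\<dots> \<le> (2 * real n ^ 2 - 1) * cheb n X"
    unfolding B_def
  proof (rule mult_right_mono)
    have "real n ^ 2 \<ge> 1" using assms(4) by simp
    then show "real n ^ 2 \<le> 2 * real n ^ 2 - 1" by simp
  qed (use cheb_ge1[OF X, of n] in simp)
  finally show ?thesis by (simp add: X_def)
qed

end
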